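(* Let $K$ be a field of characteristic $p\neq 2$, and let $Os^+(0,0)$ be the $K$-algebra with basis $\{e_i: i\in\mathbb Z,\ i\ge -1\}$ and multiplication $e_i\star e_j=(i+j+2)e_{i+j}$. Then every multilinear polynomial identity of degree $3$ of $(Os^+(0,0),\star)$ follows from the commutativity identity $t_1t_2=t_2t_1$. *)

theory Defs
  imports Main "HOL-Library.Multiset"
begin

text \<open>Elements of Os+(0,0) over K: coefficient functions c on the integers with finite
support contained in {i. i >= -1}; c i is the coefficient of the basis vector e_i.\<close>

definition os_carrier :: "(int \<Rightarrow> 'k::field) set" where
  "os_carrier = {x. finite {i. x i \<noteq> 0} \<and> (\<forall>i < -1. x i = 0)}"

text \<open>Bilinear extension of e_i * e_j = (i+j+2) e_(i+j): the coefficient of e_n in x*y is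
the sum over i+j=n (with i,j >= -1) of (i+j+2) x_i y_j.\<close>
definition os_mult :: "(int \<Rightarrow> 'k::field) \<Rightarrow> (int \<Rightarrow> 'k) \<Rightarrow> (int \<Rightarrow> 'k)" where
  "os_mult x y = (\<lambda>n. \<Sum>i\<in>{-1..n+1}. of_int (n + 2) * x i * y (n - i))"

datatype ncterm = V nat | M ncterm ncterm

fun tvars :: "ncterm \<Rightarrow> nat multiset" where
  "tvars (V i) = {#i#}"
| "tvars (M a b) = tvars a + tvars b"

text \<open>Polynomials of the free nonassociative algebra over K: finitely supported
coefficient functions on nonassociative monomials.\<close>
definition fin_poly :: "(ncterm \<Rightarrow> 'k::field) \<Rightarrow> bool" where
  "fin_poly p \<longleftrightarrow> finite {t. p t \<noteq> 0}"

definition mon :: "ncterm \<Rightarrow> ncterm \<Rightarrow> 'k::field" where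
  "mon t = (\<lambda>s. if s = t then 1 else 0)"

definition pmul :: "(ncterm \<Rightarrow> 'k::field) \<Rightarrow> (ncterm \<Rightarrow> 'k) \<Rightarrow> (ncterm \<Rightarrow> 'k)" where
  "pmul p q = (\<lambda>t. case t of V _ \<Rightarrow> 0 | M a b \<Rightarrow> p a * q b)"

text \<open>Multilinear of degree 3 in the variables t_1,t_2,t_3 (here V 0, V 1, V 2).\<close>
definition multilinear3 :: "(ncterm \<Rightarrow> 'k::field) \<Rightarrow> bool" where
  "multilinear3 p \<longleftrightarrow> fin_poly p \<and> (\<forall>t. p t \<noteq> 0 \<longrightarrow> tvars t = {#0, 1, 2#})"

fun os_evt :: "(nat \<Rightarrow> int \<Rightarrow> 'k::field) \<Rightarrow> ncterm \<Rightarrow> (int \<Rightarrow> 'k)" where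
  "os_evt v (V i) = v i"
| "os_evt v (M a b) = os_mult (os_evt v a) (os_evt v b)"

definition os_evp :: "(nat \<Rightarrow> int \<Rightarrow> 'k::field) \<Rightarrow> (ncterm \<Rightarrow> 'k) \<Rightarrow> (int \<Rightarrow> 'k)" where
  "os_evp v p = (\<lambda>n. \<Sum>t\<in>{t. p t \<noteq> 0}. p t * os_evt v t n)"

definition os_identity :: "(ncterm \<Rightarrow> 'k::field) \<Rightarrow> bool" where
  "os_identity p \<longleftrightarrow> (\<forall>v. (\<forall>i. v i \<in> os_carrier) \<longrightarrow> os_evp v p = (\<lambda>_. 0))"

text \<open>The T-ideal of the free nonassociative algebra generated by t1 t2 - t2 t1: the
smallest subspace containing all substituted instances s1 s2 - s2 s1 (s1, s2 monomials,
which span all substitutions by bilinearity) and closed under left and right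
multiplication by arbitrary polynomials.\<close>
inductive_set comm_tideal :: "(ncterm \<Rightarrow> 'k::field) set" where
  zero: "(\<lambda>_. 0) \<in> comm_tideal"
| add: "p \<in> comm_tideal \<Longrightarrow> q \<in> comm_tideal \<Longrightarrow> (\<lambda>t. p t + q t) \<in> comm_tideal"
| smult: "p \<in> comm_tideal \<Longrightarrow> (\<lambda>t. c * p t) \<in> comm_tideal"
| gen: "(\<lambda>t. mon (M s1 s2) t - mon (M s2 s1) t) \<in> comm_tideal"
| mulL: "p \<in> comm_tideal \<Longrightarrow> fin_poly q \<Longrightarrow> pmul q p \<in> comm_tideal"
| mulR: "p \<in> comm_tideal \<Longrightarrow> fin_poly q \<Longrightarrow> pmul p q \<in> comm_tideal"

end

theory Submission
  imports Defs
begin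

definition ee :: "'k::field \<Rightarrow> int \<Rightarrow> int \<Rightarrow> 'k" where
  "ee a k = (\<lambda>n. if n = k then a else 0)"

lemma os_mult_ee:
  assumes "i \<ge> -1" "j \<ge> -1"
  shows "os_mult (ee a i) (ee b j) = ee (a*b*of_int(i+j+2)) (i+j)"
proof (rule ext)
  fix n
  have "os_mult (ee a i) (ee b j) n = (\<Sum>l\<in>{-1..n+1}. if l = i then of_int (n+2) * a * ee b j (n-i) else 0)"
    unfolding os_mult_def by (rule sum.cong) (auto simp: ee_def)
  also have "\<dots> = (if i \<in> {-1..n+1} then of_int (n+2) * a * ee b j (n-i) else 0)" by simp
  also have "\<dots> = ee (a*b*of_int(i+j+2)) (i+j) n" using assms by (auto simp: ee_def algebra_simps)
  finally show "os_mult (ee a i) (ee b j) n = ee (a*b*of_int(i+j+2)) (i+j) n" .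
qed

lemma ee_carrier: "k \<ge> -1 \<Longrightarrow> ee a k \<in> os_carrier"
proof -
  assume "k \<ge> -1"
  have "{i. ee a k i \<noteq> 0} \<subseteq> {k}" by (auto simp: ee_def)
  then show ?thesis using \<open>k \<ge> -1\<close> unfolding os_carrier_def by (auto simp: ee_def intro: finite_subset)
qed

lemma two_nz:
  assumes "CHAR('k::field) \<noteq> 2" shows "(2::'k) \<noteq> 0"
proof
  assume h: "(2::'k) = 0"
  have "of_nat 2 = (0::'k)" using h by simp
  then have d: "CHAR('k) dvd 2" by (simp only: of_nat_eq_0_iff_char_dvd)
  have "CHAR('k) \<noteq> 1"
  proof
    assume "CHAR('k) = 1"
    then have "of_nat 1 = (0::'k)" by (simp only: of_nat_eq_0_iff_char_dvd) simp
    then show False by simp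
  qed
  moreover have "CHAR('k) \<noteq> 0"
  proof
    assume "CHAR('k) = 0"
    with d have "(0::nat) dvd 2" by simp
    then show False by simp
  qed
  moreover have "CHAR('k) \<le> 2" using d by (simp add: dvd_imp_le)
  ultimately show False using assms by linarith
qed

lemma size_ge1: "size (tvars t) \<ge> 1"
  by (induction t) auto

lemma size1: "size (tvars t) = 1 \<Longrightarrow> \<exists>x. t = V x"
proof (cases t)
  case (M a b)
  assume "size (tvars t) = 1"
  then show ?thesis using M size_ge1[of a] size_ge1[of b] by auto
qed simp

lemma size2: "size (tvars t) = 2 \<Longrightarrow> \<exists>x y. t = M (V x) (V y)"
proof (cases t)
  case (M a b)
  assume "size (tvars t) = 2"
  then have "size (tvars a) = 1" "size (tvars b) = 1" using M size_ge1[of a] size_ge1[of b] by auto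
  then show ?thesis using M size1 by blast
qed simp

lemma size3: "size (tvars t) = 3 \<Longrightarrow> (\<exists>x y z. t = M (V x) (M (V y) (V z))) \<or> (\<exists>x y z. t = M (M (V x) (V y)) (V z))"
proof (cases t)
  case (M a b)
  assume "size (tvars t) = 3"
  then have "(size (tvars a) = 1 \<and> size (tvars b) = 2) \<or> (size (tvars a) = 2 \<and> size (tvars b) = 1)"
    using M size_ge1[of a] size_ge1[of b] by auto
  then show ?thesis using M size1 size2 by blast
qed simp

definition a0 where "a0 = V 0"
definition a1 where "a1 = V (Suc 0)"
definition a2 where "a2 = V 2"

definition S :: "ncterm set" where
 "S = {M (M a0 a1) a2, M (M a1 a0) a2, M a2 (M a0 a1), M a2 (M a1 a0),
       M (M a1 a2) a0, M (M a2 a1) a0, M a0 (M a1 a2), M a0 (M a2 a1),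
       M (M a0 a2) a1, M (M a2 a0) a1, M a1 (M a0 a2), M a1 (M a2 a0)}"


lemma perm3: assumes e: "{#x,y,z#} = {#0::nat,1,2#}"
  shows "(x=0\<and>y=1\<and>z=2) \<or> (x=0\<and>y=2\<and>z=1) \<or> (x=1\<and>y=0\<and>z=2) \<or> (x=1\<and>y=2\<and>z=0) \<or> (x=2\<and>y=0\<and>z=1) \<or> (x=2\<and>y=1\<and>z=0)"
proof -
  have "x \<in># {#x,y,z#}" "y \<in># {#x,y,z#}" "z \<in># {#x,y,z#}" by simp_all
  then have m: "x \<in> {0,1,2}" "y \<in> {0,1,2}" "z \<in> {0,1,2}" unfolding e by simp_all
  have c: "count {#x,y,z#} 0 = 1" "count {#x,y,z#} 1 = 1" "count {#x,y,z#} 2 = 1" unfolding e by simp_all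
  from m c show ?thesis by (elim insertE emptyE; simp)
qed

lemma in_S: "tvars t = {#0,1,2#} \<Longrightarrow> t \<in> S"
proof -
  assume h: "tvars t = {#0,1,2#}"
  then have "size (tvars t) = 3" by simp
  then consider x y z where "t = M (V x) (M (V y) (V z))" | x y z where "t = M (M (V x) (V y)) (V z)"
    using size3 by blast
  then show ?thesis
  proof cases
    case 1
    then have e: "{#x,y,z#} = {#0,1,2#}" using h by (simp add: add_mset_commute)
    show ?thesis using 1 perm3[OF e] by (auto simp: S_def a0_def a1_def a2_def)
  next
    case 2
    then have e: "{#z,x,y#} = {#0,1,2#}" using h by (simp add: add_mset_commute)
    show ?thesis using 2 perm3[OF e] by (auto simp: S_def a0_def a1_def a2_def)
  qed
qed


lemma fin_mon: "fin_poly (mon t)"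
  unfolding fin_poly_def mon_def by simp

lemma I_lin: "p \<in> comm_tideal \<Longrightarrow> q \<in> comm_tideal \<Longrightarrow> (\<lambda>t. c * p t + q t) \<in> comm_tideal"
  by (intro comm_tideal.add comm_tideal.smult)

lemma I_D1: "(\<lambda>t. mon (M (M a b) c) t - mon (M (M b a) c) t) \<in> (comm_tideal :: (ncterm \<Rightarrow> 'k::field) set)"
proof -
  have "pmul (\<lambda>t. mon (M a b) t - mon (M b a) t) (mon c) \<in> (comm_tideal :: (ncterm \<Rightarrow> 'k) set)"
    by (intro comm_tideal.mulR comm_tideal.gen fin_mon)
  moreover have "pmul (\<lambda>t. mon (M a b) t - mon (M b a) t) (mon c) = (\<lambda>t. mon (M (M a b) c) t - (mon (M (M b a) c) t :: 'k))"
    by (rule ext) (auto simp: pmul_def mon_def split: ncterm.split)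
  ultimately show ?thesis by simp
qed

lemma I_D2: "(\<lambda>t. mon (M (M a b) c) t - mon (M c (M a b)) t) \<in> (comm_tideal :: (ncterm \<Rightarrow> 'k::field) set)"
  by (rule comm_tideal.gen)

lemma I_D3: "(\<lambda>t. mon (M c (M a b)) t - mon (M c (M b a)) t) \<in> (comm_tideal :: (ncterm \<Rightarrow> 'k::field) set)"
proof -
  have "pmul (mon c) (\<lambda>t. mon (M a b) t - mon (M b a) t) \<in> (comm_tideal :: (ncterm \<Rightarrow> 'k) set)"
    by (intro comm_tideal.mulL comm_tideal.gen fin_mon)
  moreover have "pmul (mon c) (\<lambda>t. mon (M a b) t - mon (M b a) t) = (\<lambda>t. mon (M c (M a b)) t - (mon (M c (M b a)) t :: 'k))"
    by (rule ext) (auto simp: pmul_def mon_def split: ncterm.split)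
  ultimately show ?thesis by simp
qed

lemma I_class: "(\<lambda>t. \<alpha> * (mon (M (M b a) c) t - mon (M (M a b) c) t) + (\<beta> * (mon (M c (M a b)) t - mon (M (M a b) c) t)
     + (\<gamma> * (mon (M c (M b a)) t - mon (M (M a b) c) t) + 0))) \<in> (comm_tideal :: (ncterm \<Rightarrow> 'k::field) set)"
proof -
  have 1: "(\<lambda>t. mon (M (M b a) c) t - mon (M (M a b) c) t) \<in> (comm_tideal :: (ncterm \<Rightarrow> 'k) set)"
    using comm_tideal.smult[OF I_D1[of a b c], of "-1"] by simp
  have 2: "(\<lambda>t. mon (M c (M a b)) t - mon (M (M a b) c) t) \<in> (comm_tideal :: (ncterm \<Rightarrow> 'k) set)"
    using comm_tideal.smult[OF I_D2[of a b c], of "-1"] by simp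
  have 3: "(\<lambda>t. mon (M c (M b a)) t - mon (M (M a b) c) t) \<in> (comm_tideal :: (ncterm \<Rightarrow> 'k) set)"
    using comm_tideal.add[OF comm_tideal.smult[OF I_D3[of c a b], of "-1"] 2] by simp
  show ?thesis by (intro I_lin 1 2 3 comm_tideal.zero)
qed


lemma solve3:
  fixes x y z :: "'k::field"
  assumes "(2::'k) \<noteq> 0" "2*x+y+z = 0" "2*y+z+x = 0" "2*z+x+y = 0"
  shows "x = 0 \<and> y = 0 \<and> z = 0"
proof -
  have "(2*2) * (x+y+z) = (2*x+y+z) + (2*y+z+x) + (2*z+x+y)" by (simp add: algebra_simps)
  then have "(2*2) * (x+y+z) = 0" using assms(2-4) by simp
  then have s: "x+y+z = 0" using assms(1) by (metis mult_eq_0_iff)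
  have "x = (2*x+y+z) - (x+y+z)" by (simp add: algebra_simps)
  also have "\<dots> = 0" using assms(2) s by simp
  finally have 1: "x = 0" .
  have "y = (2*y+z+x) - (x+y+z)" by (simp add: algebra_simps)
  also have "\<dots> = 0" using assms(3) s by simp
  finally have 2: "y = 0" .
  have "z = (2*z+x+y) - (x+y+z)" by (simp add: algebra_simps)
  also have "\<dots> = 0" using assms(4) s by simp
  finally have 3: "z = 0" .
  show ?thesis using 1 2 3 by blast
qed

theorem mainTheorem13:
  fixes f :: "ncterm \<Rightarrow> 'k::field"
  assumes "CHAR('k) \<noteq> 2"
    and "multilinear3 f"
    and "os_identity f"
  shows "f \<in> comm_tideal"
proof -
  have two: "(2::'k) \<noteq> 0" using assms(1) by (rule two_nz)
  have supp: "{t. f t \<noteq> 0} \<subseteq> S" using assms(2) in_S unfolding multilinear3_def by blast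
  have finS: "finite S" unfolding S_def by simp
  have evS: "os_evp v f n = (\<Sum>t\<in>S. f t * os_evt v t n)" for v n
    unfolding os_evp_def by (rule sum.mono_neutral_left[OF finS supp]) auto
  have vc: "os_evp (\<lambda>i. ee 1 (if i = c then -1 else 0)) f = (\<lambda>_. 0)" for c
  proof -
    have "\<forall>i. ee (1::'k) (if i = c then -1 else 0) \<in> os_carrier" by (simp add: ee_carrier)
    then show ?thesis using assms(3)[unfolded os_identity_def, rule_format, of "\<lambda>i. ee 1 (if i = c then -1 else 0)"] by simp
  qed
  have e2: "os_evp (\<lambda>i. ee 1 (if i = 2 then -1 else 0)) f (-1) = 0" using vc[of 2] by simp
  have e0: "os_evp (\<lambda>i. ee 1 (if i = 0 then -1 else 0)) f (-1) = 0" using vc[of 0] by simp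
  have e1: "os_evp (\<lambda>i. ee 1 (if i = 1 then -1 else 0)) f (-1) = 0" using vc[of 1] by simp
  have q2: "2 * (f (M (M a0 a1) a2) + f (M (M a1 a0) a2) + f (M a2 (M a0 a1)) + f (M a2 (M a1 a0))) + (f (M (M a1 a2) a0) + f (M (M a2 a1) a0) + f (M a0 (M a1 a2)) + f (M a0 (M a2 a1))) + (f (M (M a0 a2) a1) + f (M (M a2 a0) a1) + f (M a1 (M a0 a2)) + f (M a1 (M a2 a0))) = 0"
    using e2 unfolding evS unfolding S_def a0_def a1_def a2_def by (simp add: os_mult_ee, simp add: ee_def algebra_simps)
  have q0: "2 * (f (M (M a1 a2) a0) + f (M (M a2 a1) a0) + f (M a0 (M a1 a2)) + f (M a0 (M a2 a1))) + (f (M (M a0 a2) a1) + f (M (M a2 a0) a1) + f (M a1 (M a0 a2)) + f (M a1 (M a2 a0))) + (f (M (M a0 a1) a2) + f (M (M a1 a0) a2) + f (M a2 (M a0 a1)) + f (M a2 (M a1 a0))) = 0"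
    using e0 unfolding evS unfolding S_def a0_def a1_def a2_def by (simp add: os_mult_ee, simp add: ee_def algebra_simps)
  have q1: "2 * (f (M (M a0 a2) a1) + f (M (M a2 a0) a1) + f (M a1 (M a0 a2)) + f (M a1 (M a2 a0))) + (f (M (M a0 a1) a2) + f (M (M a1 a0) a2) + f (M a2 (M a0 a1)) + f (M a2 (M a1 a0))) + (f (M (M a1 a2) a0) + f (M (M a2 a1) a0) + f (M a0 (M a1 a2)) + f (M a0 (M a2 a1))) = 0"
    using e1 unfolding evS unfolding S_def a0_def a1_def a2_def by (simp add: os_mult_ee, simp add: ee_def algebra_simps)
  from solve3[OF two q2 q0 q1] have z: "(f (M (M a0 a1) a2) + f (M (M a1 a0) a2) + f (M a2 (M a0 a1)) + f (M a2 (M a1 a0))) = 0" "(f (M (M a1 a2) a0) + f (M (M a2 a1) a0) + f (M a0 (M a1 a2)) + f (M a0 (M a2 a1))) = 0" "(f (M (M a0 a2) a1) + f (M (M a2 a0) a1) + f (M a1 (M a0 a2)) + f (M a1 (M a2 a0))) = 0" by auto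
  have r: "f (M (M a0 a1) a2) = - (f (M (M a1 a0) a2) + f (M a2 (M a0 a1)) + f (M a2 (M a1 a0)))" "f (M (M a1 a2) a0) = - (f (M (M a2 a1) a0) + f (M a0 (M a1 a2)) + f (M a0 (M a2 a1)))" "f (M (M a0 a2) a1) = - (f (M (M a2 a0) a1) + f (M a1 (M a0 a2)) + f (M a1 (M a2 a0)))"
    using z by (simp_all only: eq_neg_iff_add_eq_0 add.assoc)
  note r' = r[unfolded a0_def a1_def a2_def]
  have fe: "f = (\<lambda>t. (f (M (M a1 a0) a2) * (mon (M (M a1 a0) a2) t - mon (M (M a0 a1) a2) t) + (f (M a2 (M a0 a1)) * (mon (M a2 (M a0 a1)) t - mon (M (M a0 a1) a2) t) + (f (M a2 (M a1 a0)) * (mon (M a2 (M a1 a0)) t - mon (M (M a0 a1) a2) t) + 0))) + ((f (M (M a2 a1) a0) * (mon (M (M a2 a1) a0) t - mon (M (M a1 a2) a0) t) + (f (M a0 (M a1 a2)) * (mon (M a0 (M a1 a2)) t - mon (M (M a1 a2) a0) t) + (f (M a0 (M a2 a1)) * (mon (M a0 (M a2 a1)) t - mon (M (M a1 a2) a0) t) + 0))) + (f (M (M a2 a0) a1) * (mon (M (M a2 a0) a1) t - mon (M (M a0 a2) a1) t) + (f (M a1 (M a0 a2)) * (mon (M a1 (M a0 a2)) t - mon (M (M a0 a2) a1) t) + (f (M a1 (M a2 a0)) * (mon (M a1 (M a2 a0)) t - mon (M (M a0 a2) a1) t) + 0)))))"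
  proof (rule ext)
    fix t
    show "f t = (f (M (M a1 a0) a2) * (mon (M (M a1 a0) a2) t - mon (M (M a0 a1) a2) t) + (f (M a2 (M a0 a1)) * (mon (M a2 (M a0 a1)) t - mon (M (M a0 a1) a2) t) + (f (M a2 (M a1 a0)) * (mon (M a2 (M a1 a0)) t - mon (M (M a0 a1) a2) t) + 0))) + ((f (M (M a2 a1) a0) * (mon (M (M a2 a1) a0) t - mon (M (M a1 a2) a0) t) + (f (M a0 (M a1 a2)) * (mon (M a0 (M a1 a2)) t - mon (M (M a1 a2) a0) t) + (f (M a0 (M a2 a1)) * (mon (M a0 (M a2 a1)) t - mon (M (M a1 a2) a0) t) + 0))) + (f (M (M a2 a0) a1) * (mon (M (M a2 a0) a1) t - mon (M (M a0 a2) a1) t) + (f (M a1 (M a0 a2)) * (mon (M a1 (M a0 a2)) t - mon (M (M a0 a2) a1) t) + (f (M a1 (M a2 a0)) * (mon (M a1 (M a2 a0)) t - mon (M (M a0 a2) a1) t) + 0))))"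
    proof (cases "t \<in> S")
      case False
      then have "f t = 0" using supp by blast
      then show ?thesis using False unfolding S_def by (simp add: mon_def)
    next
      case True
      then show ?thesis unfolding S_def a0_def a1_def a2_def
        by (elim insertE emptyE) (simp_all add: mon_def r' algebra_simps)
    qed
  qed
  have "(\<lambda>t. (f (M (M a1 a0) a2) * (mon (M (M a1 a0) a2) t - mon (M (M a0 a1) a2) t) + (f (M a2 (M a0 a1)) * (mon (M a2 (M a0 a1)) t - mon (M (M a0 a1) a2) t) + (f (M a2 (M a1 a0)) * (mon (M a2 (M a1 a0)) t - mon (M (M a0 a1) a2) t) + 0))) + ((f (M (M a2 a1) a0) * (mon (M (M a2 a1) a0) t - mon (M (M a1 a2) a0) t) + (f (M a0 (M a1 a2)) * (mon (M a0 (M a1 a2)) t - mon (M (M a1 a2) a0) t) + (f (M a0 (M a2 a1)) * (mon (M a0 (M a2 a1)) t - mon (M (M a1 a2) a0) t) + 0))) + (f (M (M a2 a0) a1) * (mon (M (M a2 a0) a1) t - mon (M (M a0 a2) a1) t) + (f (M a1 (M a0 a2)) * (mon (M a1 (M a0 a2)) t - mon (M (M a0 a2) a1) t) + (f (M a1 (M a2 a0)) * (mon (M a1 (M a2 a0)) t - mon (M (M a0 a2) a1) t) + 0))))) \<in> comm_tideal"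
    by (intro comm_tideal.add I_class)
  then show ?thesis using fe by simp
qed

end
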